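(* Let $A\subset\mathbb R^\tau$ be a compact max-min convex set and let $\xi\colon J(A)\to\mathbb R^\tau$ be defined by $\xi(\mu)=(\mu(p_\alpha))_{\alpha<\tau}$, where $p_\alpha\colon A\to\mathbb R$ is the $\alpha$-th coordinate projection. Then $\xi(J(A))\subset A$.
   Context: A max-min measure on a compact Hausdorff space $X$ is a functional $\mu\colon C(X)\to\mathbb R$ (not assumed continuous) with $\mu(c_X)=c$ for constants, $\mu(\varphi\vee\psi)=\mu(\varphi)\vee\mu(\psi)$, $\mu(c\wedge\varphi)=c\wedge\mu(\varphi)$ for $c\in\mathbb R$; $J(X)$ is the set of max-min measures with the topology of pointwise convergence on $C(X)$. $\mathbb R^\tau$ carries the product topology. A subset $A\subset\mathbb R^\tau$ is max-min convex if $x\vee(\lambda\wedge y)\in A$ for all $x,y\in A$, $\lambda\in\mathbb R$ (coordinatewise operations). *)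

theory Defs
  imports "HOL-Analysis.Analysis"
begin

text \<open>Points of R^tau are functions 'i \<Rightarrow> real (index type 'i plays the role of tau);
  the type 'i \<Rightarrow> real carries the product topology (Function_Topology).
  C(A) is represented by continuous functions on A, normalised to 0 outside A.\<close>

definition rst :: "('a \<Rightarrow> bool) \<Rightarrow> ('a \<Rightarrow> real) \<Rightarrow> 'a \<Rightarrow> real" where
  "rst P f = (\<lambda>x. if P x then f x else 0)"

definition cfun :: "('i \<Rightarrow> real) set \<Rightarrow> (('i \<Rightarrow> real) \<Rightarrow> real) set" where
  "cfun A = {f. continuous_on A f \<and> (\<forall>x. x \<notin> A \<longrightarrow> f x = 0)}"

definition maxmin_measure :: "('i \<Rightarrow> real) set \<Rightarrow> ((('i \<Rightarrow> real) \<Rightarrow> real) \<Rightarrow> real) \<Rightarrow> bool" where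
  "maxmin_measure A \<mu> \<longleftrightarrow>
     (\<forall>c. \<mu> (rst (\<lambda>x. x \<in> A) (\<lambda>_. c)) = c) \<and>
     (\<forall>\<phi>\<in>cfun A. \<forall>\<psi>\<in>cfun A. \<mu> (rst (\<lambda>x. x \<in> A) (\<lambda>x. max (\<phi> x) (\<psi> x))) = max (\<mu> \<phi>) (\<mu> \<psi>)) \<and>
     (\<forall>c. \<forall>\<phi>\<in>cfun A. \<mu> (rst (\<lambda>x. x \<in> A) (\<lambda>x. min c (\<phi> x))) = min c (\<mu> \<phi>))"

definition J :: "('i \<Rightarrow> real) set \<Rightarrow> ((('i \<Rightarrow> real) \<Rightarrow> real) \<Rightarrow> real) set" where
  "J A = {\<mu>. maxmin_measure A \<mu>}"

definition maxmin_convex :: "('i \<Rightarrow> real) set \<Rightarrow> bool" where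
  "maxmin_convex A \<longleftrightarrow> (\<forall>x\<in>A. \<forall>y\<in>A. \<forall>l::real. (\<lambda>i. max (x i) (min l (y i))) \<in> A)"

definition xi :: "('i \<Rightarrow> real) set \<Rightarrow> ((('i \<Rightarrow> real) \<Rightarrow> real) \<Rightarrow> real) \<Rightarrow> 'i \<Rightarrow> real" where
  "xi A \<mu> = (\<lambda>\<alpha>. \<mu> (rst (\<lambda>x. x \<in> A) (\<lambda>x. x \<alpha>)))"

end

theory Submission
  imports Defs
begin

lemma proj_cont [continuous_intros]:
  "continuous_on S (\<lambda>x::'i\<Rightarrow>real. x i)"
  by (rule continuous_on_subset[OF continuous_on_product_coordinates subset_UNIV])

lemma proj_cont_comp:
  assumes "continuous_on S f"
  shows "continuous_on S (\<lambda>x. (f x :: 'i\<Rightarrow>real) i)"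
  by (rule continuous_on_compose2[OF continuous_on_product_coordinates assms subset_UNIV])

definition R :: "('i \<Rightarrow> real) set \<Rightarrow> (('i \<Rightarrow> real) \<Rightarrow> real) \<Rightarrow> ('i \<Rightarrow> real) \<Rightarrow> real" where
  "R A f = rst (\<lambda>x. x \<in> A) f"

lemma R_cfun:
  assumes "continuous_on A f"
  shows "R A f \<in> cfun A"
proof -
  have "continuous_on A (R A f)"
    by (rule continuous_on_eq[OF assms]) (simp add: R_def rst_def)
  moreover have "\<forall>x. x \<notin> A \<longrightarrow> R A f x = 0" by (simp add: R_def rst_def)
  ultimately show ?thesis unfolding cfun_def by simp
qed

context
  fixes A :: "('i \<Rightarrow> real) set" and \<mu>
  assumes mm: "maxmin_measure A \<mu>"
begin

lemma mu_const: "\<mu> (R A (\<lambda>_. c)) = c"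
  using mm unfolding maxmin_measure_def R_def by blast

lemma mu_max:
  assumes "continuous_on A f" "continuous_on A g"
  shows "\<mu> (R A (\<lambda>x. max (f x) (g x))) = max (\<mu> (R A f)) (\<mu> (R A g))"
proof -
  have eq: "rst (\<lambda>x. x \<in> A) (\<lambda>x. max (R A f x) (R A g x)) = R A (\<lambda>x. max (f x) (g x))"
    unfolding R_def rst_def by auto
  have ax: "\<forall>\<phi>\<in>cfun A. \<forall>\<psi>\<in>cfun A. \<mu> (rst (\<lambda>x. x \<in> A) (\<lambda>x. max (\<phi> x) (\<psi> x))) = max (\<mu> \<phi>) (\<mu> \<psi>)"
    using mm unfolding maxmin_measure_def by blast
  have "\<mu> (rst (\<lambda>x. x \<in> A) (\<lambda>x. max (R A f x) (R A g x))) = max (\<mu> (R A f)) (\<mu> (R A g))"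
    using ax R_cfun[OF assms(1)] R_cfun[OF assms(2)] by blast
  then show ?thesis using eq by simp
qed

lemma mu_min:
  assumes "continuous_on A f"
  shows "\<mu> (R A (\<lambda>x. min c (f x))) = min c (\<mu> (R A f))"
proof -
  have eq: "rst (\<lambda>x. x \<in> A) (\<lambda>x. min c (R A f x)) = R A (\<lambda>x. min c (f x))"
    unfolding R_def rst_def by auto
  have ax: "\<forall>c. \<forall>\<phi>\<in>cfun A. \<mu> (rst (\<lambda>x. x \<in> A) (\<lambda>x. min c (\<phi> x))) = min c (\<mu> \<phi>)"
    using mm unfolding maxmin_measure_def by blast
  have "\<mu> (rst (\<lambda>x. x \<in> A) (\<lambda>x. min c (R A f x))) = min c (\<mu> (R A f))"
    using ax R_cfun[OF assms(1)] by blast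
  then show ?thesis using eq by simp
qed

lemma mu_mono:
  assumes "continuous_on A f" "continuous_on A g" "\<And>x. x \<in> A \<Longrightarrow> f x \<le> g x"
  shows "\<mu> (R A f) \<le> \<mu> (R A g)"
proof -
  have "R A (\<lambda>x. max (f x) (g x)) = R A g"
    unfolding R_def rst_def using assms(3) by (auto simp: max_def)
  then show ?thesis using mu_max[OF assms(1,2)] by simp
qed

lemma lem1:
  assumes "continuous_on A \<phi>" "continuous_on A \<psi>" "low < r" "\<mu> (R A \<phi>) < r"
    "\<And>x. x \<in> A \<Longrightarrow> min r (\<psi> x) \<le> max low (\<phi> x)"
  shows "\<mu> (R A \<psi>) < r"
proof -
  have "min r (\<mu> (R A \<psi>)) = \<mu> (R A (\<lambda>x. min r (\<psi> x)))"
    using mu_min[OF assms(2)] by simp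
  also have "\<dots> \<le> \<mu> (R A (\<lambda>x. max low (\<phi> x)))"
    by (rule mu_mono) (use assms in \<open>auto intro!: continuous_intros\<close>)
  also have "\<dots> = max low (\<mu> (R A \<phi>))"
    using mu_max[of "\<lambda>_. low" \<phi>] assms(1) mu_const by (simp add: continuous_on_const)
  finally show ?thesis using assms(3,4) by linarith
qed

lemma lem_max:
  assumes "finite G" "c < T" "\<And>g. g \<in> G \<Longrightarrow> continuous_on A (f g)"
    "\<And>g. g \<in> G \<Longrightarrow> \<mu> (R A (f g)) < T"
  shows "continuous_on A (\<lambda>x. Max (insert c ((\<lambda>g. f g x) ` G))) \<and>
         \<mu> (R A (\<lambda>x. Max (insert c ((\<lambda>g. f g x) ` G)))) < T"
  using assms
proof (induction G rule: finite_induct)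
  case empty
  then show ?case using mu_const by (simp add: continuous_on_const)
next
  case (insert a G)
  have eq: "(\<lambda>x. Max (insert c ((\<lambda>g. f g x) ` insert a G))) =
        (\<lambda>x. max (f a x) (Max (insert c ((\<lambda>g. f g x) ` G))))"
  proof (rule ext)
    fix x
    have "insert c ((\<lambda>g. f g x) ` insert a G) = insert (f a x) (insert c ((\<lambda>g. f g x) ` G))"
      by auto
    then show "Max (insert c ((\<lambda>g. f g x) ` insert a G)) = max (f a x) (Max (insert c ((\<lambda>g. f g x) ` G)))"
      using insert.hyps by simp
  qed
  from insert have IH: "continuous_on A (\<lambda>x. Max (insert c ((\<lambda>g. f g x) ` G))) \<and>
         \<mu> (R A (\<lambda>x. Max (insert c ((\<lambda>g. f g x) ` G)))) < T" by auto
  have ca: "continuous_on A (f a)" using insert by auto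
  have c2: "continuous_on A (\<lambda>x. max (f a x) (Max (insert c ((\<lambda>g. f g x) ` G))))"
    using IH ca by (intro continuous_on_max) auto
  have "\<mu> (R A (\<lambda>x. max (f a x) (Max (insert c ((\<lambda>g. f g x) ` G)))))
     = max (\<mu> (R A (f a))) (\<mu> (R A (\<lambda>x. Max (insert c ((\<lambda>g. f g x) ` G)))))"
    using mu_max[OF ca, of "\<lambda>x. Max (insert c ((\<lambda>g. f g x) ` G))"] IH by simp
  moreover have "\<mu> (R A (f a)) < T" using insert.prems(3) by simp
  ultimately have "\<mu> (R A (\<lambda>x. max (f a x) (Max (insert c ((\<lambda>g. f g x) ` G))))) < T"
    using IH by (simp only: max_less_iff_conj)
  then show ?case unfolding eq using c2 by blast
qed


lemma mR: "xi A \<mu> \<gamma> = \<mu> (R A (\<lambda>x. x \<gamma>))"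
  unfolding xi_def R_def by simp

lemma gen:
  assumes "finite G" "\<epsilon> > 0" "continuous_on A \<psi>" "\<mu> (R A \<psi>) \<ge> T"
    "\<forall>\<gamma>\<in>G. xi A \<mu> \<gamma> < T"
  shows "\<exists>a\<in>A. \<psi> a \<ge> T - \<epsilon> \<and> (\<forall>\<gamma>\<in>G. a \<gamma> \<le> xi A \<mu> \<gamma> + \<epsilon>)"
proof (rule ccontr)
  assume H: "\<not> ?thesis"
  define m where "m = xi A \<mu>"
  define r where "r \<gamma> = m \<gamma> + min \<epsilon> (T - m \<gamma>) / 2" for \<gamma>
  define K where "K \<gamma> = (T - m \<gamma>) / (m \<gamma> + \<epsilon> - r \<gamma>)" for \<gamma>
  define ch where "ch \<gamma> x = max (m \<gamma>) (min T (m \<gamma> + (x \<gamma> - r \<gamma>) * K \<gamma>))" for \<gamma> x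
  have cch: "continuous_on A (ch \<gamma>)" for \<gamma> unfolding ch_def by (intro continuous_intros)
  have r1: "m \<gamma> < r \<gamma>" "r \<gamma> < T" "r \<gamma> < m \<gamma> + \<epsilon>" "K \<gamma> > 0" if "\<gamma> \<in> G" for \<gamma>
  proof -
    have gt: "m \<gamma> < T" using that assms(5) m_def by auto
    show "m \<gamma> < r \<gamma>" "r \<gamma> < T" "r \<gamma> < m \<gamma> + \<epsilon>"
      unfolding r_def using gt assms(2) by (auto simp: min_def field_simps)
    then show "K \<gamma> > 0" unfolding K_def using gt by auto
  qed
  have \<mu>ch: "\<mu> (R A (ch \<gamma>)) < T" if "\<gamma> \<in> G" for \<gamma>
  proof -
    have "\<mu> (R A (ch \<gamma>)) < r \<gamma>"
    proof (rule lem1[OF proj_cont cch, of "m \<gamma>"])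
      show "m \<gamma> < r \<gamma>" using r1[OF that] by simp
      show "\<mu> (R A (\<lambda>x. x \<gamma>)) < r \<gamma>" using r1[OF that] mR m_def by simp
      fix x assume "x \<in> A"
      show "min (r \<gamma>) (ch \<gamma> x) \<le> max (m \<gamma>) (x \<gamma>)"
      proof (cases "x \<gamma> \<le> r \<gamma>")
        case True
        then have "(x \<gamma> - r \<gamma>) * K \<gamma> \<le> 0" using r1[OF that]
          by (simp add: mult_nonpos_nonneg)
        then have "ch \<gamma> x = m \<gamma>" unfolding ch_def by simp
        then show ?thesis by simp
      next
        case False
        then show ?thesis by simp
      qed
    qed
    then show ?thesis using r1[OF that] by simp
  qed
  define g where "g x = Max (insert (T - \<epsilon>) ((\<lambda>\<gamma>. ch \<gamma> x) ` G))" for x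
  have gprops: "continuous_on A g \<and> \<mu> (R A g) < T"
    unfolding g_def[abs_def] using lem_max[of G "T - \<epsilon>" T ch] assms(1,2) cch \<mu>ch by auto
  have pw: "min T (\<psi> x) \<le> g x" if "x \<in> A" for x
  proof -
    have fin: "finite (insert (T - \<epsilon>) ((\<lambda>\<gamma>. ch \<gamma> x) ` G))" using assms(1) by simp
    from H that have "\<psi> x < T - \<epsilon> \<or> (\<exists>\<gamma>\<in>G. x \<gamma> > m \<gamma> + \<epsilon>)"
      unfolding m_def by force
    then show ?thesis
    proof
      assume "\<psi> x < T - \<epsilon>"
      moreover have "T - \<epsilon> \<le> g x" unfolding g_def using fin by (rule Max_ge) simp
      ultimately show ?thesis by linarith
    next
      assume "\<exists>\<gamma>\<in>G. x \<gamma> > m \<gamma> + \<epsilon>"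
      then obtain \<gamma> where G: "\<gamma> \<in> G" and xg: "x \<gamma> > m \<gamma> + \<epsilon>" by blast
      have "(m \<gamma> + \<epsilon> - r \<gamma>) * K \<gamma> \<le> (x \<gamma> - r \<gamma>) * K \<gamma>"
        using xg r1[OF G] by (intro mult_right_mono) auto
      moreover have "(m \<gamma> + \<epsilon> - r \<gamma>) * K \<gamma> = T - m \<gamma>"
        unfolding K_def using r1[OF G] by simp
      ultimately have "ch \<gamma> x = T" unfolding ch_def using r1[OF G] by simp
      moreover have "ch \<gamma> x \<le> g x" unfolding g_def using fin G by (intro Max_ge) auto
      ultimately show ?thesis by simp
    qed
  qed
  have "T = min T (\<mu> (R A \<psi>))" using assms(4) by simp
  also have "\<dots> = \<mu> (R A (\<lambda>x. min T (\<psi> x)))" using mu_min[OF assms(3)] by simp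
  also have "\<dots> \<le> \<mu> (R A g)"
    by (rule mu_mono) (use assms(3) gprops pw in \<open>auto intro!: continuous_intros\<close>)
  finally show False using gprops by simp
qed


lemma approx:
  assumes conv: "maxmin_convex A" and F: "finite F" and e: "\<epsilon> > 0"
  shows "\<exists>b\<in>A. \<forall>\<gamma>\<in>F. \<bar>b \<gamma> - xi A \<mu> \<gamma>\<bar> \<le> \<epsilon>"
proof -
  define m where "m = xi A \<mu>"
  define T0 where "T0 = Max (insert 0 (m ` F)) + 1"
  have T0: "\<forall>\<gamma>\<in>F. xi A \<mu> \<gamma> < T0"
  proof
    fix \<gamma> assume "\<gamma> \<in> F"
    then have "m \<gamma> \<le> Max (insert 0 (m ` F))" using F by (intro Max_ge) auto
    then show "xi A \<mu> \<gamma> < T0" unfolding T0_def m_def by simp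
  qed
  obtain a0 where a0: "a0 \<in> A" "\<forall>\<gamma>\<in>F. a0 \<gamma> \<le> m \<gamma> + \<epsilon>"
  proof -
    have "\<exists>a\<in>A. T0 - \<epsilon> \<le> T0 \<and> (\<forall>\<gamma>\<in>F. a \<gamma> \<le> xi A \<mu> \<gamma> + \<epsilon>)"
      using gen[OF F e continuous_on_const[of A T0], of T0] T0 mu_const[of T0] by simp
    then show ?thesis using that unfolding m_def by blast
  qed
  have ab: "\<exists>a\<in>A. a \<beta> \<ge> m \<beta> - \<epsilon> \<and> (\<forall>\<gamma>\<in>F. m \<gamma> < m \<beta> \<longrightarrow> a \<gamma> \<le> m \<gamma> + \<epsilon>)" for \<beta>
  proof -
    have "\<exists>a\<in>A. a \<beta> \<ge> m \<beta> - \<epsilon> \<and> (\<forall>\<gamma>\<in>{\<gamma>\<in>F. m \<gamma> < m \<beta>}. a \<gamma> \<le> m \<gamma> + \<epsilon>)"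
      using gen[of "{\<gamma>\<in>F. m \<gamma> < m \<beta>}" \<epsilon> "\<lambda>x. x \<beta>" "m \<beta>", OF _ e proj_cont] F mR
      unfolding m_def by simp
    then show ?thesis by auto
  qed
  have ind: "F' \<subseteq> F \<Longrightarrow> \<exists>b\<in>A. (\<forall>\<gamma>\<in>F. b \<gamma> \<le> m \<gamma> + \<epsilon>) \<and> (\<forall>\<beta>\<in>F'. b \<beta> \<ge> m \<beta> - \<epsilon>)" for F'
  proof (induction F' rule: infinite_finite_induct)
    case (infinite F')
    then show ?case using finite_subset[OF _ F] by blast
  next
    case empty
    then show ?case using a0 by blast
  next
    case (insert \<beta> F')
    then obtain b where b: "b \<in> A" "\<forall>\<gamma>\<in>F. b \<gamma> \<le> m \<gamma> + \<epsilon>" "\<forall>\<beta>\<in>F'. b \<beta> \<ge> m \<beta> - \<epsilon>"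
      by auto
    obtain a where a: "a \<in> A" "a \<beta> \<ge> m \<beta> - \<epsilon>" "\<forall>\<gamma>\<in>F. m \<gamma> < m \<beta> \<longrightarrow> a \<gamma> \<le> m \<gamma> + \<epsilon>"
      using ab by blast
    define b' where "b' = (\<lambda>i. max (b i) (min (m \<beta>) (a i)))"
    have "b' \<in> A" using conv b(1) a(1) unfolding maxmin_convex_def b'_def by blast
    moreover have "\<forall>\<gamma>\<in>F. b' \<gamma> \<le> m \<gamma> + \<epsilon>"
    proof
      fix \<gamma> assume g: "\<gamma> \<in> F"
      have "min (m \<beta>) (a \<gamma>) \<le> m \<gamma> + \<epsilon>"
      proof (cases "m \<gamma> < m \<beta>")
        case True then show ?thesis using a(3) g by force
      next
        case False then show ?thesis using e by linarith
      qed
      then show "b' \<gamma> \<le> m \<gamma> + \<epsilon>" unfolding b'_def using b(2) g by simp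
    qed
    moreover have "\<forall>\<beta>'\<in>insert \<beta> F'. b' \<beta>' \<ge> m \<beta>' - \<epsilon>"
      unfolding b'_def using b(3) a(2) e by auto
    ultimately show ?case by blast
  qed
  obtain b where "b \<in> A" "\<forall>\<gamma>\<in>F. b \<gamma> \<le> m \<gamma> + \<epsilon>" "\<forall>\<beta>\<in>F. b \<beta> \<ge> m \<beta> - \<epsilon>"
    using ind[OF order_refl] by blast
  then have "\<forall>\<gamma>\<in>F. \<bar>b \<gamma> - xi A \<mu> \<gamma>\<bar> \<le> \<epsilon>" unfolding m_def by (force simp: abs_le_iff)
  then show ?thesis using \<open>b \<in> A\<close> by blast
qed

end


lemma small_zero:
  fixes x :: real
  assumes "\<And>n. \<bar>x\<bar> \<le> 1 / real (Suc n)"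
  shows "x = 0"
proof (rule ccontr)
  assume "x \<noteq> 0"
  then have "\<bar>x\<bar> > 0" by simp
  then obtain n where "inverse (real (Suc n)) < \<bar>x\<bar>" using reals_Archimedean by blast
  with assms[of n] show False by (simp add: divide_inverse)
qed

theorem mainTheorem19:
  fixes A :: "('i \<Rightarrow> real) set"
  assumes "compact A" and "maxmin_convex A"
  shows "xi A ` J A \<subseteq> A"
proof
  fix y assume "y \<in> xi A ` J A"
  then obtain \<mu> where mu: "\<mu> \<in> J A" and y: "y = xi A \<mu>" by blast
  have mm: "maxmin_measure A \<mu>" using mu unfolding J_def by simp
  define S where "S = (\<lambda>(\<gamma>, n::nat). {a::'i\<Rightarrow>real. \<bar>a \<gamma> - y \<gamma>\<bar> \<le> 1 / real (Suc n)})"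
  have "A \<inter> (\<Inter>i\<in>UNIV. S i) \<noteq> {}"
  proof (rule compact_imp_fip_image[OF assms(1)])
    fix i :: "'i \<times> nat"
    obtain \<gamma> n where i: "i = (\<gamma>, n)" by force
    have "closed {a::'i\<Rightarrow>real. \<bar>a \<gamma> - y \<gamma>\<bar> \<le> 1 / real (Suc n)}"
      by (intro closed_Collect_le continuous_intros)
    then show "closed (S i)" unfolding S_def i by simp
  next
    fix I' :: "('i \<times> nat) set" assume fin: "finite I'"
    define N where "N = Max (insert 0 (snd ` I'))"
    obtain b where b: "b \<in> A" "\<forall>\<gamma>\<in>fst ` I'. \<bar>b \<gamma> - y \<gamma>\<bar> \<le> 1 / real (Suc N)"
      using approx[OF mm assms(2), of "fst ` I'" "1 / real (Suc N)"] fin y by auto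
    have "b \<in> S i" if "i \<in> I'" for i
    proof -
      obtain \<gamma> n where i: "i = (\<gamma>, n)" by force
      have "n \<le> N" unfolding N_def using fin that i by (intro Max_ge) force+
      then have "1 / real (Suc N) \<le> 1 / real (Suc n)" by (simp add: frac_le)
      moreover have "\<bar>b \<gamma> - y \<gamma>\<bar> \<le> 1 / real (Suc N)" using b(2) that i by force
      ultimately show ?thesis unfolding S_def i by simp
    qed
    then show "A \<inter> (\<Inter>i\<in>I'. S i) \<noteq> {}" using b(1) by blast
  qed
  then obtain a where a: "a \<in> A" "\<And>i. a \<in> S i" by blast
  have "a = y"
  proof
    fix \<gamma>
    have "\<bar>a \<gamma> - y \<gamma>\<bar> \<le> 1 / real (Suc n)" for n using a(2)[of "(\<gamma>, n)"] unfolding S_def by simp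
    then show "a \<gamma> = y \<gamma>" using small_zero[of "a \<gamma> - y \<gamma>"] by simp
  qed
  then show "y \<in> A" using a(1) by simp
qed

end
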